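(* Let $(X_i, X_j)$ be jointly Gaussian with standard normal marginals and correlation $\rho_{ij}$. Let $k, g \ge 2$ be integers and let $S_{i0} < S_{i1} < \dots < S_{i(k-2)}$ and $S_{j0} < S_{j1} < \dots < S_{j(g-2)}$ be real cutoffs; set $S_{i(-1)} = S_{j(-1)} = -\infty$ and $S_{i(k-1)} = S_{j(g-1)} = +\infty$. Define discrete variables $V_i \in \{0,\dots,k-1\}$ and $V_j \in \{0,\dots,g-1\}$ by $V_i = c$ iff $S_{i(c-1)} < X_i \le S_{ic}$ and $V_j = d$ iff $S_{j(d-1)} < X_j \le S_{jd}$. Then $$\mathrm{Cov}(V_i, V_j) = \sum_{c_i=0}^{k-2}\sum_{c_j=0}^{g-2}\Big[\Psi(S_{ic_i}, S_{jc_j}, \rho_{ij}) - \Psi(S_{ic_i}, S_{jc_j}, 0)\Big],$$ where $\Psi(u,v,\rho)$ denotes the cumulative distribution function, evaluated at $(u,v)$, of the standard bivariate normal distribution with correlation $\rho$.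
   Context: $V_i$ and $V_j$ are obtained by "linear discretization" of the standard Gaussian variables $X_i$ and $X_j$, i.e., by partitioning the real line with increasing cutoffs and labeling the intervals $0,1,2,\dots$ from left to right. *)

theory Defs
  imports "HOL-Probability.Probability"
begin

definition std_normal_measure :: "real measure" where
  "std_normal_measure = density lborel (\<lambda>x. ennreal (std_normal_density x))"

text \<open>For |rho| < 1 this is the measure with the usual bivariate normal density;
  for rho = +-1 it is the degenerate Gaussian law.\<close>
definition bivariate_std_normal :: "real \<Rightarrow> (real \<times> real) measure" where
  "bivariate_std_normal rho =
     distr (std_normal_measure \<Otimes>\<^sub>M std_normal_measure) (borel \<Otimes>\<^sub>M borel)
       (\<lambda>(z1, z2). (z1, rho * z1 + sqrt (1 - rho\<^sup>2) * z2))"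

definition Psi :: "real \<Rightarrow> real \<Rightarrow> real \<Rightarrow> real" where
  "Psi u v rho = measure (bivariate_std_normal rho) ({..u} \<times> {..v})"

definition covariance :: "'a measure \<Rightarrow> ('a \<Rightarrow> real) \<Rightarrow> ('a \<Rightarrow> real) \<Rightarrow> real" where
  "covariance M X Y =
     (\<integral>\<omega>. (X \<omega> - (\<integral>\<eta>. X \<eta> \<partial>M)) * (Y \<omega> - (\<integral>\<eta>. Y \<eta> \<partial>M)) \<partial>M)"

definition cutoff :: "nat \<Rightarrow> (nat \<Rightarrow> real) \<Rightarrow> int \<Rightarrow> ereal" where
  "cutoff k S c = (if c \<le> -1 then -\<infinity> else if c \<ge> int k - 1 then \<infinity> else ereal (S (nat c)))"

end

theory Submission
  imports Defs
begin
lemma G_prob: "prob_space std_normal_measure"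
  unfolding std_normal_measure_def by (rule prob_space_normal_density) simp

lemma G_sets[simp, measurable_cong]: "sets std_normal_measure = sets borel"
  unfolding std_normal_measure_def by simp

lemma G_space[simp]: "space std_normal_measure = UNIV"
  unfolding std_normal_measure_def by simp

lemma GG_prob: "prob_space (std_normal_measure \<Otimes>\<^sub>M std_normal_measure)"
proof -
  interpret G: prob_space std_normal_measure by (rule G_prob)
  interpret pair_prob_space std_normal_measure std_normal_measure ..
  show ?thesis by unfold_locales
qed

lemma GG_sets[simp]: "sets (std_normal_measure \<Otimes>\<^sub>M std_normal_measure) = sets (borel \<Otimes>\<^sub>M borel)"
  by (intro sets_pair_measure_cong) simp_all

lemma GG_space[simp]: "space (std_normal_measure \<Otimes>\<^sub>M std_normal_measure) = UNIV"
  by (simp add: space_pair_measure)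

lemma GG_Times: "A \<in> sets borel \<Longrightarrow> B \<in> sets borel \<Longrightarrow>
   measure (std_normal_measure \<Otimes>\<^sub>M std_normal_measure) (A \<times> B) = measure std_normal_measure A * measure std_normal_measure B"
proof -
  interpret G: prob_space std_normal_measure by (rule G_prob)
  interpret pair_prob_space std_normal_measure std_normal_measure ..
  assume "A \<in> sets borel" "B \<in> sets borel"
  then show ?thesis by (simp add: measure_def G.emeasure_pair_measure_Times enn2real_mult)
qed

lemma GG_fst: "distr (std_normal_measure \<Otimes>\<^sub>M std_normal_measure) lborel fst = std_normal_measure"
proof (rule measure_eqI)
  interpret G: prob_space std_normal_measure by (rule G_prob)
  interpret pair_prob_space std_normal_measure std_normal_measure ..
  fix A assume "A \<in> sets (distr (std_normal_measure \<Otimes>\<^sub>M std_normal_measure) lborel fst)"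
  then have A: "A \<in> sets borel" by simp
  have "fst -` A \<inter> space (std_normal_measure \<Otimes>\<^sub>M std_normal_measure) = A \<times> UNIV" by auto
  then show "emeasure (distr (std_normal_measure \<Otimes>\<^sub>M std_normal_measure) lborel fst) A = emeasure std_normal_measure A"
    using A by (simp add: emeasure_distr G.emeasure_pair_measure_Times G.emeasure_space_1[simplified] del: G_space)
qed simp

lemma GG_snd: "distr (std_normal_measure \<Otimes>\<^sub>M std_normal_measure) lborel snd = std_normal_measure"
proof (rule measure_eqI)
  interpret G: prob_space std_normal_measure by (rule G_prob)
  interpret pair_prob_space std_normal_measure std_normal_measure ..
  fix A assume "A \<in> sets (distr (std_normal_measure \<Otimes>\<^sub>M std_normal_measure) lborel snd)"
  then have A: "A \<in> sets borel" by simp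
  have "snd -` A \<inter> space (std_normal_measure \<Otimes>\<^sub>M std_normal_measure) = UNIV \<times> A" by auto
  then show "emeasure (distr (std_normal_measure \<Otimes>\<^sub>M std_normal_measure) lborel snd) A = emeasure std_normal_measure A"
    using A by (simp add: emeasure_distr G.emeasure_pair_measure_Times G.emeasure_space_1[simplified] del: G_space)
qed simp


lemma GG_lin:
  assumes r1: "-1 \<le> rho" and r2: "rho \<le> 1"
  shows "distr (std_normal_measure \<Otimes>\<^sub>M std_normal_measure) lborel
           (\<lambda>z. rho * fst z + sqrt (1 - rho\<^sup>2) * snd z) = std_normal_measure"
proof -
  let ?P = "std_normal_measure \<Otimes>\<^sub>M std_normal_measure"
  interpret P: prob_space ?P by (rule GG_prob)
  have mf: "fst \<in> measurable ?P lborel" by (simp add: measurable_fst'')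
  have ms: "snd \<in> measurable ?P lborel" by (simp add: measurable_snd'')
  have df: "distributed ?P lborel fst std_normal_density"
    unfolding distributed_def using GG_fst mf by (simp add: std_normal_measure_def)
  have ds: "distributed ?P lborel snd std_normal_density"
    unfolding distributed_def using GG_snd ms by (simp add: std_normal_measure_def)
  have ind: "P.indep_var borel fst borel snd"
  proof (subst P.indep_var_distribution_eq, intro conjI)
    show "fst \<in> measurable ?P borel" using mf by simp
    show "snd \<in> measurable ?P borel" using ms by simp
    have "distr ?P borel fst = std_normal_measure"
      using GG_fst by (metis distr_cong sets_lborel)
    moreover have "distr ?P borel snd = std_normal_measure"
      using GG_snd by (metis distr_cong sets_lborel)
    moreover have "distr ?P (borel \<Otimes>\<^sub>M borel) (\<lambda>x. (fst x, snd x)) = ?P"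
      by (simp add: distr_id2)
    ultimately show "distr ?P borel fst \<Otimes>\<^sub>M distr ?P borel snd = distr ?P (borel \<Otimes>\<^sub>M borel) (\<lambda>x. (fst x, snd x))"
      by simp
  qed
  have G_eq: "density lborel (\<lambda>x. ennreal (std_normal_density x)) = std_normal_measure"
    by (simp add: std_normal_measure_def)
  show ?thesis
  proof (cases "rho = 0")
    case True
    then show ?thesis using GG_snd by simp
  next
    case rho0: False
    show ?thesis
    proof (cases "rho\<^sup>2 = 1")
      case True
      then have "rho = 1 \<or> rho = -1" by (simp add: power2_eq_1_iff)
      then show ?thesis
      proof
        assume "rho = 1" then show ?thesis using GG_fst by simp
      next
        assume rm: "rho = -1"
        have "distributed ?P lborel (\<lambda>x. 0 + (-1) * fst x) (normal_density (0 + (-1) * 0) (\<bar>-1\<bar> * 1))"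
          by (rule P.normal_density_affine[OF df]) simp_all
        then have "distributed ?P lborel (\<lambda>z. rho * fst z + sqrt (1 - rho\<^sup>2) * snd z) std_normal_density"
          using rm by simp
        then show ?thesis using G_eq by (simp add: distributed_def)
      qed
    next
      case False
      have "rho\<^sup>2 \<le> 1" using r1 r2 by (simp add: abs_le_iff abs_square_le_1)
      then have s: "0 < 1 - rho\<^sup>2" using False by simp
      define s where "s = sqrt (1 - rho\<^sup>2)"
      have spos: "0 < s" using s by (simp add: s_def)
      have d1: "distributed ?P lborel (\<lambda>x. 0 + rho * fst x) (normal_density (0 + rho * 0) (\<bar>rho\<bar> * 1))"
        by (rule P.normal_density_affine[OF df]) (use rho0 in simp_all)
      have d2: "distributed ?P lborel (\<lambda>x. 0 + s * snd x) (normal_density (0 + s * 0) (\<bar>s\<bar> * 1))"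
        by (rule P.normal_density_affine[OF ds]) (use spos in simp_all)
      have ind2: "P.indep_var borel (\<lambda>x. rho * fst x) borel (\<lambda>x. s * snd x)"
        using P.indep_var_compose[OF ind, of "\<lambda>x. rho * x" borel "\<lambda>x. s * x" borel]
        by (simp add: comp_def)
      have "distributed ?P lborel (\<lambda>x. rho * fst x + s * snd x)
              (normal_density (0 + 0) (sqrt (\<bar>rho\<bar>\<^sup>2 + s\<^sup>2)))"
        by (rule P.add_indep_normal[OF ind2]) (use d1 d2 rho0 spos in simp_all)
      moreover have "sqrt (\<bar>rho\<bar>\<^sup>2 + s\<^sup>2) = 1" using s by (simp add: s_def)
      ultimately have "distributed ?P lborel (\<lambda>z. rho * fst z + sqrt (1 - rho\<^sup>2) * snd z) std_normal_density"
        by (simp add: s_def)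
      then show ?thesis using G_eq by (simp add: distributed_def)
    qed
  qed
qed

lemma Psi0: "Psi a b 0 = measure std_normal_measure {..a} * measure std_normal_measure {..b}"
proof -
  have "(\<lambda>(z1::real, z2::real). (z1, 0 * z1 + sqrt (1 - 0\<^sup>2) * z2)) = (\<lambda>x. x)" by auto
  then have "bivariate_std_normal 0 = std_normal_measure \<Otimes>\<^sub>M std_normal_measure"
    unfolding bivariate_std_normal_def using distr_id2[of "borel \<Otimes>\<^sub>M borel" "std_normal_measure \<Otimes>\<^sub>M std_normal_measure"] by simp
  then show ?thesis unfolding Psi_def by (simp add: GG_Times)
qed

lemma biv_fst:
  assumes "-1 \<le> rho" "rho \<le> 1"
  shows "measure (bivariate_std_normal rho) ({..a} \<times> UNIV) = measure std_normal_measure {..a}"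
proof -
  interpret G: prob_space std_normal_measure by (rule G_prob)
  let ?T = "(\<lambda>(z1::real, z2::real). (z1, rho * z1 + sqrt (1 - rho\<^sup>2) * z2))"
  have T: "?T \<in> measurable (std_normal_measure \<Otimes>\<^sub>M std_normal_measure) (borel \<Otimes>\<^sub>M borel)"
    by (subst measurable_cong_sets[OF GG_sets refl]) measurable
  have "?T -` ({..a} \<times> UNIV) \<inter> space (std_normal_measure \<Otimes>\<^sub>M std_normal_measure) = {..a} \<times> UNIV"
    by auto
  then show ?thesis unfolding bivariate_std_normal_def
    using T by (simp add: measure_distr GG_Times G.prob_space[simplified])
qed

lemma biv_snd:
  assumes "-1 \<le> rho" "rho \<le> 1"
  shows "measure (bivariate_std_normal rho) (UNIV \<times> {..b}) = measure std_normal_measure {..b}"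
proof -
  let ?T = "(\<lambda>(z1::real, z2::real). (z1, rho * z1 + sqrt (1 - rho\<^sup>2) * z2))"
  let ?L = "(\<lambda>z. rho * fst z + sqrt (1 - rho\<^sup>2) * snd z)"
  have T: "?T \<in> measurable (std_normal_measure \<Otimes>\<^sub>M std_normal_measure) (borel \<Otimes>\<^sub>M borel)"
    by (subst measurable_cong_sets[OF GG_sets refl]) measurable
  have L: "?L \<in> measurable (std_normal_measure \<Otimes>\<^sub>M std_normal_measure) lborel"
    by (subst measurable_cong_sets[OF GG_sets refl]) measurable
  have "?T -` (UNIV \<times> {..b}) \<inter> space (std_normal_measure \<Otimes>\<^sub>M std_normal_measure)
       = ?L -` {..b} \<inter> space (std_normal_measure \<Otimes>\<^sub>M std_normal_measure)"
    by auto
  then have "measure (bivariate_std_normal rho) (UNIV \<times> {..b}) =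
      measure (distr (std_normal_measure \<Otimes>\<^sub>M std_normal_measure) lborel ?L) {..b}"
    unfolding bivariate_std_normal_def
    using T L by (simp add: measure_distr)
  then show ?thesis using GG_lin[OF assms] by simp
qed


lemma term_eq:
  assumes M: "prob_space M"
    and Xi: "Xi \<in> borel_measurable M" and Xj: "Xj \<in> borel_measurable M"
    and r: "-1 \<le> rho" "rho \<le> 1"
    and D: "distr M (borel \<Otimes>\<^sub>M borel) (\<lambda>\<omega>. (Xi \<omega>, Xj \<omega>)) = bivariate_std_normal rho"
  shows "measure M ({\<omega>\<in>space M. a < Xi \<omega>} \<inter> {\<omega>\<in>space M. b < Xj \<omega>})
         - measure M {\<omega>\<in>space M. a < Xi \<omega>} * measure M {\<omega>\<in>space M. b < Xj \<omega>}
         = Psi a b rho - Psi a b 0"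
proof -
  interpret prob_space M by (rule M)
  have XY: "(\<lambda>\<omega>. (Xi \<omega>, Xj \<omega>)) \<in> measurable M (borel \<Otimes>\<^sub>M borel)" using Xi Xj by measurable
  let ?E1 = "{\<omega>\<in>space M. Xi \<omega> \<le> a}" and ?E2 = "{\<omega>\<in>space M. Xj \<omega> \<le> b}"
  have e1: "?E1 \<in> events" using Xi by measurable
  have e2: "?E2 \<in> events" using Xj by measurable
  have "measure M (?E1 \<inter> ?E2) = measure (bivariate_std_normal rho) ({..a} \<times> {..b})"
  proof -
    have "(\<lambda>\<omega>. (Xi \<omega>, Xj \<omega>)) -` ({..a} \<times> {..b}) \<inter> space M = ?E1 \<inter> ?E2" by auto
    then show ?thesis using XY by (simp add: D[symmetric] measure_distr)
  qed
  then have p12: "measure M (?E1 \<inter> ?E2) = Psi a b rho" by (simp add: Psi_def)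
  have "measure M ?E1 = measure (bivariate_std_normal rho) ({..a} \<times> UNIV)"
  proof -
    have "(\<lambda>\<omega>. (Xi \<omega>, Xj \<omega>)) -` ({..a} \<times> UNIV) \<inter> space M = ?E1" by auto
    then show ?thesis using XY by (simp add: D[symmetric] measure_distr)
  qed
  then have p1: "measure M ?E1 = measure std_normal_measure {..a}" using biv_fst[OF r] by simp
  have "measure M ?E2 = measure (bivariate_std_normal rho) (UNIV \<times> {..b})"
  proof -
    have "(\<lambda>\<omega>. (Xi \<omega>, Xj \<omega>)) -` (UNIV \<times> {..b}) \<inter> space M = ?E2" by auto
    then show ?thesis using XY by (simp add: D[symmetric] measure_distr)
  qed
  then have p2: "measure M ?E2 = measure std_normal_measure {..b}" using biv_snd[OF r] by simp
  have c1: "{\<omega>\<in>space M. a < Xi \<omega>} = space M - ?E1" by auto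
  have c2: "{\<omega>\<in>space M. b < Xj \<omega>} = space M - ?E2" by auto
  have c12: "{\<omega>\<in>space M. a < Xi \<omega>} \<inter> {\<omega>\<in>space M. b < Xj \<omega>} = space M - (?E1 \<union> ?E2)" by auto
  have un: "measure M (?E1 \<union> ?E2) = measure M ?E1 + measure M ?E2 - measure M (?E1 \<inter> ?E2)"
    using finite_measure_Union'[of ?E1 "?E2 - ?E1"] finite_measure_Diff[of ?E2 "?E1 \<inter> ?E2"] e1 e2
    by (simp add: Int_commute Diff_Int Un_Diff_cancel) 
  let ?Fa = "measure std_normal_measure {..a}" and ?Fb = "measure std_normal_measure {..b}"
  have q1: "prob (space M - ?E1) = 1 - ?Fa" using prob_compl[OF e1] p1 by simp
  have q2: "prob (space M - ?E2) = 1 - ?Fb" using prob_compl[OF e2] p2 by simp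
  have q12: "prob (space M - (?E1 \<union> ?E2)) = 1 - (?Fa + ?Fb - Psi a b rho)"
    using prob_compl[OF sets.Un[OF e1 e2]] un p1 p2 p12 by simp
  show ?thesis
    unfolding c12 unfolding c1 c2 q1 q2 q12 Psi0 by (simp add: algebra_simps)
qed


lemma mono_steps:
  fixes S :: "nat \<Rightarrow> real"
  assumes st: "\<And>c. c + 1 \<le> m \<Longrightarrow> S c < S (c + 1)"
    and "c \<le> d" "d \<le> m"
  shows "S c \<le> S d"
proof -
  have "d \<le> m \<longrightarrow> S c \<le> S d" using assms(2)
  proof (induction rule: dec_induct)
    case base then show ?case by simp
  next
    case (step n)
    show ?case
    proof
      assume n: "Suc n \<le> m"
      then have "S n < S (Suc n)" using st[of n] by simp
      moreover have "S c \<le> S n" using step n by simp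
      ultimately show "S c \<le> S (Suc n)" by simp
    qed
  qed
  then show ?thesis using assms(3) by simp
qed

lemma count_eq:
  fixes S :: "nat \<Rightarrow> real"
  assumes k: "k \<ge> 2"
    and st: "\<And>c. c + 1 \<le> k - 2 \<Longrightarrow> S c < S (c + 1)"
    and v: "v < k"
    and lo: "cutoff k S (int v - 1) < ereal x" and hi: "ereal x \<le> cutoff k S (int v)"
  shows "real v = (\<Sum>c\<le>k - 2. indicator {y. S c < y} x)"
proof -
  have set: "{c\<in>{..k-2}. S c < x} = {..<v}"
  proof (intro set_eqI iffI)
    fix c assume c: "c \<in> {c\<in>{..k-2}. S c < x}"
    show "c \<in> {..<v}"
    proof (rule ccontr)
      assume "c \<notin> {..<v}"
      then have cv: "v \<le> c" by simp
      with c have "v \<le> k - 2" by simp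
      then have "cutoff k S (int v) = ereal (S v)" unfolding cutoff_def using k by auto
      with hi have "x \<le> S v" by simp
      also have "S v \<le> S c" using mono_steps[of "k-2" S v c] st cv c by simp
      finally show False using c by simp
    qed
  next
    fix c assume "c \<in> {..<v}"
    then have cv: "c < v" by simp
    then have "v - 1 \<le> k - 2" using v by simp
    then have "cutoff k S (int v - 1) = ereal (S (v - 1))" unfolding cutoff_def using k cv
      by (auto simp: nat_diff_distrib of_nat_diff)
    with lo have "S (v - 1) < x" by simp
    moreover have "S c \<le> S (v - 1)" using mono_steps[of "k-2" S c "v-1"] st cv \<open>v - 1 \<le> k - 2\<close> by simp
    ultimately show "c \<in> {c\<in>{..k-2}. S c < x}" using cv \<open>v - 1 \<le> k - 2\<close> by simp
  qed
  have "(\<Sum>c\<le>k - 2. indicator {y. S c < y} x) = (\<Sum>c\<le>k - 2. if S c < x then (1::real) else 0)"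
    by (rule sum.cong) (auto simp: indicator_def)
  also have "\<dots> = (\<Sum>c\<in>{c\<in>{..k-2}. S c < x}. (1::real))"
    by (rule sum.inter_filter[symmetric]) simp
  also have "\<dots> = real v" unfolding set by simp
  finally show ?thesis by simp
qed

lemma cov_formula:
  assumes M: "prob_space M" and X: "integrable M X" and Y: "integrable M Y"
    and XY: "integrable M (\<lambda>\<omega>. X \<omega> * Y \<omega>)"
  shows "covariance M X Y = (\<integral>\<omega>. X \<omega> * Y \<omega> \<partial>M) - (\<integral>\<omega>. X \<omega> \<partial>M) * (\<integral>\<omega>. Y \<omega> \<partial>M)"
proof -
  interpret prob_space M by (rule M)
  define a where "a = (\<integral>\<omega>. X \<omega> \<partial>M)"
  define b where "b = (\<integral>\<omega>. Y \<omega> \<partial>M)"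
  have "(\<lambda>\<omega>. (X \<omega> - a) * (Y \<omega> - b)) = (\<lambda>\<omega>. (X \<omega> * Y \<omega> - b * X \<omega>) - (a * Y \<omega> - a * b))"
    by (auto simp: algebra_simps)
  then have "covariance M X Y = (\<integral>\<omega>. (X \<omega> * Y \<omega> - b * X \<omega>) - (a * Y \<omega> - a * b) \<partial>M)"
    unfolding covariance_def a_def b_def by simp
  also have "\<dots> = (\<integral>\<omega>. X \<omega> * Y \<omega> \<partial>M) - b * a - (a * b - a * b)"
    using X Y XY by (simp add: prob_space flip: a_def b_def)
  finally show ?thesis by (simp add: a_def b_def)
qed

theorem mainTheorem3:
  fixes M :: "'a measure"
    and Xi Xj :: "'a \<Rightarrow> real"
    and Vi Vj :: "'a \<Rightarrow> nat"
    and rho :: real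
    and k g :: nat
    and Si Sj :: "nat \<Rightarrow> real"
  assumes "prob_space M"
    and "Xi \<in> borel_measurable M" and "Xj \<in> borel_measurable M"
    and "-1 \<le> rho" and "rho \<le> 1"
    and "distr M (borel \<Otimes>\<^sub>M borel) (\<lambda>\<omega>. (Xi \<omega>, Xj \<omega>)) = bivariate_std_normal rho"
    and "k \<ge> 2" and "g \<ge> 2"
    and "\<And>c. c + 1 \<le> k - 2 \<Longrightarrow> Si c < Si (c + 1)"
    and "\<And>d. d + 1 \<le> g - 2 \<Longrightarrow> Sj d < Sj (d + 1)"
    and "\<And>\<omega>. \<omega> \<in> space M \<Longrightarrow> Vi \<omega> < k"
    and "\<And>\<omega>. \<omega> \<in> space M \<Longrightarrow> Vj \<omega> < g"
    and "\<And>\<omega> c. \<omega> \<in> space M \<Longrightarrow> c < k \<Longrightarrow>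
           Vi \<omega> = c \<longleftrightarrow> cutoff k Si (int c - 1) < ereal (Xi \<omega>) \<and> ereal (Xi \<omega>) \<le> cutoff k Si (int c)"
    and "\<And>\<omega> d. \<omega> \<in> space M \<Longrightarrow> d < g \<Longrightarrow>
           Vj \<omega> = d \<longleftrightarrow> cutoff g Sj (int d - 1) < ereal (Xj \<omega>) \<and> ereal (Xj \<omega>) \<le> cutoff g Sj (int d)"
  shows "covariance M (\<lambda>\<omega>. real (Vi \<omega>)) (\<lambda>\<omega>. real (Vj \<omega>)) =
         (\<Sum>ci\<le>k - 2. \<Sum>cj\<le>g - 2. Psi (Si ci) (Sj cj) rho - Psi (Si ci) (Sj cj) 0)"
proof -
  interpret prob_space M by fact
  note Xi = assms(2) and Xj = assms(3)
  define A where "A c = {\<omega>\<in>space M. Si c < Xi \<omega>}" for c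
  define B where "B d = {\<omega>\<in>space M. Sj d < Xj \<omega>}" for d
  have Aev: "A c \<in> events" for c unfolding A_def using Xi by measurable
  have Bev: "B d \<in> events" for d unfolding B_def using Xj by measurable
  define X where "X \<omega> = (\<Sum>c\<le>k - 2. indicator (A c) \<omega> :: real)" for \<omega>
  define Y where "Y \<omega> = (\<Sum>d\<le>g - 2. indicator (B d) \<omega> :: real)" for \<omega>
  have VX: "real (Vi \<omega>) = X \<omega>" if \<omega>: "\<omega> \<in> space M" for \<omega>
  proof -
    have v: "Vi \<omega> < k" using assms(11) \<omega> .
    have c: "cutoff k Si (int (Vi \<omega>) - 1) < ereal (Xi \<omega>) \<and> ereal (Xi \<omega>) \<le> cutoff k Si (int (Vi \<omega>))"
      using assms(13)[OF \<omega> v] by simp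
    have "real (Vi \<omega>) = (\<Sum>c\<le>k - 2. indicator {y. Si c < y} (Xi \<omega>))"
      using count_eq[of k Si "Vi \<omega>" "Xi \<omega>"] assms(7) assms(9) v c by blast
    also have "\<dots> = X \<omega>" unfolding X_def A_def using \<omega> by (intro sum.cong) (auto simp: indicator_def)
    finally show ?thesis .
  qed
  have VY: "real (Vj \<omega>) = Y \<omega>" if \<omega>: "\<omega> \<in> space M" for \<omega>
  proof -
    have v: "Vj \<omega> < g" using assms(12) \<omega> .
    have c: "cutoff g Sj (int (Vj \<omega>) - 1) < ereal (Xj \<omega>) \<and> ereal (Xj \<omega>) \<le> cutoff g Sj (int (Vj \<omega>))"
      using assms(14)[OF \<omega> v] by simp
    have "real (Vj \<omega>) = (\<Sum>c\<le>g - 2. indicator {y. Sj c < y} (Xj \<omega>))"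
      using count_eq[of g Sj "Vj \<omega>" "Xj \<omega>"] assms(8) assms(10) v c by blast
    also have "\<dots> = Y \<omega>" unfolding Y_def B_def using \<omega> by (intro sum.cong) (auto simp: indicator_def)
    finally show ?thesis .
  qed
  have iA: "integrable M (indicator (A c) :: 'a \<Rightarrow> real)" for c
    by (rule integrable_real_indicator[OF Aev]) (simp add: less_top[symmetric])
  have iB: "integrable M (indicator (B d) :: 'a \<Rightarrow> real)" for d
    by (rule integrable_real_indicator[OF Bev]) (simp add: less_top[symmetric])
  have iAB: "integrable M (indicator (A c \<inter> B d) :: 'a \<Rightarrow> real)" for c d
    by (rule integrable_real_indicator[OF sets.Int[OF Aev Bev]]) (simp add: less_top[symmetric])
  have XYeq: "X \<omega> * Y \<omega> = (\<Sum>c\<le>k - 2. \<Sum>d\<le>g - 2. indicator (A c \<inter> B d) \<omega>)" for \<omega>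
    unfolding X_def Y_def sum_product by (simp add: indicator_inter_arith)
  have iX: "integrable M X" unfolding X_def using iA by auto
  have iY: "integrable M Y" unfolding Y_def using iB by auto
  have iXY: "integrable M (\<lambda>\<omega>. X \<omega> * Y \<omega>)" unfolding XYeq using iAB by auto
  have EX: "(\<integral>\<omega>. X \<omega> \<partial>M) = (\<Sum>c\<le>k - 2. prob (A c))"
    unfolding X_def using iA Aev by (simp add: integral_sum)
  have EY: "(\<integral>\<omega>. Y \<omega> \<partial>M) = (\<Sum>d\<le>g - 2. prob (B d))"
    unfolding Y_def using iB Bev by (simp add: integral_sum)
  have EXY: "(\<integral>\<omega>. X \<omega> * Y \<omega> \<partial>M) = (\<Sum>c\<le>k - 2. \<Sum>d\<le>g - 2. prob (A c \<inter> B d))"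
    unfolding XYeq using iAB Aev Bev by (simp add: integral_sum integrable_sum sets.Int)
  have "covariance M (\<lambda>\<omega>. real (Vi \<omega>)) (\<lambda>\<omega>. real (Vj \<omega>)) = covariance M X Y"
  proof -
    have e1: "(\<integral>\<omega>. real (Vi \<omega>) \<partial>M) = (\<integral>\<omega>. X \<omega> \<partial>M)" using VX by (intro Bochner_Integration.integral_cong) auto
    have e2: "(\<integral>\<omega>. real (Vj \<omega>) \<partial>M) = (\<integral>\<omega>. Y \<omega> \<partial>M)" using VY by (intro Bochner_Integration.integral_cong) auto
    show ?thesis unfolding covariance_def e1 e2 using VX VY by (intro Bochner_Integration.integral_cong) auto
  qed
  also have "\<dots> = (\<integral>\<omega>. X \<omega> * Y \<omega> \<partial>M) - (\<integral>\<omega>. X \<omega> \<partial>M) * (\<integral>\<omega>. Y \<omega> \<partial>M)"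
    by (rule cov_formula[OF assms(1) iX iY iXY])
  also have "\<dots> = (\<Sum>c\<le>k - 2. \<Sum>d\<le>g - 2. prob (A c \<inter> B d) - prob (A c) * prob (B d))"
    unfolding EX EY EXY sum_product by (simp add: sum_subtractf)
  also have "\<dots> = (\<Sum>ci\<le>k - 2. \<Sum>cj\<le>g - 2. Psi (Si ci) (Sj cj) rho - Psi (Si ci) (Sj cj) 0)"
    unfolding A_def B_def using term_eq[OF assms(1,2,3,4,5,6)] by simp
  finally show ?thesis .
qed

end
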